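(* Let $L:(0,\infty)\to(0,\infty)$ be slowly varying, and suppose there is $K>1$ such that $L$ is non-increasing and strictly less than $1$ on $[K,\infty)$. Then the condition $$-\int_K^\infty\frac{\log L(r)}{r(\log r)^2}\,dr<\infty$$ is equivalent to the following condition: for every $\delta>0$ there exists $K_1=K_1(\delta)>K$ such that for all $r>K_1$, $$\sum_{k=1}^\infty\frac{\log L(r^{2^k})}{2^k\log r}>-\delta,$$ and therefore $\prod_{k=1}^\infty [L(r^{2^k})]^{2^{-k}}>r^{-\delta}$.
   Context: A function $L$ is slowly varying if $L(cr)/L(r)\to1$ as $r\to\infty$ for every $c>0$. *)

theory Defs
  imports "HOL-Analysis.Analysis"
begin

definition slowly_varying :: "(real \<Rightarrow> real) \<Rightarrow> bool" where
  "slowly_varying L \<longleftrightarrow> (\<forall>c>0. ((\<lambda>r. L (c * r) / L r) \<longlongrightarrow> 1) at_top)"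

end

theory Submission imports Defs begin

locale lp =
  fixes L :: "real \<Rightarrow> real" and K :: real
  assumes pos: "\<And>r. r > 0 \<Longrightarrow> L r > 0" and Kgt1: "K > 1"
    and noninc: "\<And>x y. K \<le> x \<Longrightarrow> x \<le> y \<Longrightarrow> L y \<le> L x"
    and lt1: "\<And>r. K \<le> r \<Longrightarrow> L r < 1"
begin

definition f where "f x = - ln (L x)"
definition h where "h x = f x / (x * (ln x)^2)"

lemma f_pos: "K \<le> x \<Longrightarrow> 0 < f x"
  using pos[of x] lt1[of x] Kgt1 unfolding f_def by (simp add: ln_less_zero)

lemma f_mono: "K \<le> x \<Longrightarrow> x \<le> y \<Longrightarrow> f x \<le> f y"
  using pos[of x] pos[of y] noninc[of x y] Kgt1 unfolding f_def by simp

lemma h_nonneg: "K \<le> x \<Longrightarrow> 0 \<le> h x"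
  using f_pos[of x] Kgt1 unfolding h_def by simp

lemma meas: assumes "S \<in> sets borel" "S \<subseteq> {K..}"
  shows "(\<lambda>x. ennreal (h x) * indicator S x) \<in> borel_measurable borel"
proof -
  define L' where "L' x = L (max x K)" for x
  have "mono (\<lambda>x. - L' x)" by (auto simp: mono_def L'_def intro!: noninc)
  then have "(\<lambda>x. - L' x) \<in> borel_measurable borel" by (rule borel_measurable_mono)
  then have "(\<lambda>x. - (- L' x)) \<in> borel_measurable borel" by measurable
  then have m[measurable]: "L' \<in> borel_measurable borel" by simp
  have *: "(\<lambda>x. ennreal (- ln (L' x) / (x * (ln x)^2)) * indicator S x) \<in> borel_measurable borel"
    using assms(1) by measurable
  have "(\<lambda>x. ennreal (h x) * indicator S x) = (\<lambda>x. ennreal (- ln (L' x) / (x * (ln x)^2)) * indicator S x)"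
    using assms(2) by (intro ext) (auto simp: h_def f_def L'_def max_def split: split_indicator)
  then show ?thesis using * by simp
qed

lemma piece: assumes "K \<le> a" shows
 "ennreal (f a / (2 * ln a)) \<le> (\<integral>\<^sup>+x. ennreal (h x) * indicator {a..<a^2} x \<partial>lborel)"
 "(\<integral>\<^sup>+x. ennreal (h x) * indicator {a..<a^2} x \<partial>lborel) \<le> ennreal (f (a^2) / (2 * ln a))"
proof -
  have a1: "a > 1" using Kgt1 assms by simp
  have la: "ln a > 0" using a1 by simp
  have aa: "a \<le> a^2" using a1 by (simp add: power2_eq_square)
  define w where "w x = 1 / (x * (ln x)^2)" for x :: real
  have wm[measurable]: "w \<in> borel_measurable borel" unfolding w_def by measurable
  have "(\<integral>\<^sup>+x. ennreal (w x) * indicator {a..a^2} x \<partial>lborel) = ennreal ((- 1 / ln (a^2)) - (- 1 / ln a))"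
  proof (rule nn_integral_FTC_Icc[OF wm])
    fix x assume x: "x \<in> {a..a^2}"
    then have x1: "x > 1" "ln x > 0" using a1 by auto
    show "((\<lambda>x. - 1 / ln x) has_real_derivative w x) (at x)"
      using x1 by (auto intro!: derivative_eq_intros simp: w_def field_simps power2_eq_square)
    show "0 \<le> w x" using x1 by (simp add: w_def)
  qed (use aa in auto)
  also have "(- 1 / ln (a^2)) - (- 1 / ln a) = 1 / (2 * ln a)"
    using la a1 by (simp add: ln_realpow field_simps)
  finally have Icc: "(\<integral>\<^sup>+x. ennreal (w x) * indicator {a..a^2} x \<partial>lborel) = ennreal (1 / (2 * ln a))" .
  have Ico: "(\<integral>\<^sup>+x. ennreal (w x) * indicator {a..<a^2} x \<partial>lborel) = ennreal (1 / (2 * ln a))"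
    unfolding Icc[symmetric]
    by (rule nn_integral_cong_AE) (use AE_lborel_singleton[of "a^2"] in \<open>eventually_elim, auto split: split_indicator\<close>)
  have wi[measurable]: "(\<lambda>x. ennreal (w x) * indicator {a..<a^2} x) \<in> borel_measurable lborel" by measurable
  have "ennreal (f a / (2 * ln a)) = ennreal (f a) * (\<integral>\<^sup>+x. ennreal (w x) * indicator {a..<a^2} x \<partial>lborel)"
    unfolding Ico using f_pos[OF assms] la by (simp add: ennreal_mult[symmetric])
  also have "\<dots> = (\<integral>\<^sup>+x. ennreal (f a) * (ennreal (w x) * indicator {a..<a^2} x) \<partial>lborel)"
    by (rule nn_integral_cmult[symmetric]) simp
  also have "\<dots> \<le> (\<integral>\<^sup>+x. ennreal (h x) * indicator {a..<a^2} x \<partial>lborel)"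
  proof (rule nn_integral_mono)
    fix x
    show "ennreal (f a) * (ennreal (w x) * indicator {a..<a^2} x) \<le> ennreal (h x) * indicator {a..<a^2} x"
    proof (cases "x \<in> {a..<a^2}")
      case True
      then have "f a \<le> f x" "0 \<le> w x" "x > 0" using f_mono[OF assms] a1 by (auto simp: w_def)
      then have "f a * w x \<le> h x" unfolding h_def w_def by (simp add: divide_right_mono)
      then show ?thesis using True f_pos[OF assms] \<open>0 \<le> w x\<close>
        by (simp add: ennreal_mult[symmetric] ennreal_leI)
    qed simp
  qed
  finally show "ennreal (f a / (2 * ln a)) \<le> (\<integral>\<^sup>+x. ennreal (h x) * indicator {a..<a^2} x \<partial>lborel)" .
  have "(\<integral>\<^sup>+x. ennreal (h x) * indicator {a..<a^2} x \<partial>lborel) \<le> (\<integral>\<^sup>+x. ennreal (f (a^2)) * (ennreal (w x) * indicator {a..<a^2} x) \<partial>lborel)"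
  proof (rule nn_integral_mono)
    fix x
    show "ennreal (h x) * indicator {a..<a^2} x \<le> ennreal (f (a^2)) * (ennreal (w x) * indicator {a..<a^2} x)"
    proof (cases "x \<in> {a..<a^2}")
      case True
      then have "f x \<le> f (a^2)" "0 \<le> w x" "x > 0" "K \<le> x" using f_mono[of x "a^2"] a1 assms by (auto simp: w_def)
      then have "h x \<le> f (a^2) * w x" unfolding h_def w_def by (simp add: divide_right_mono)
      then show ?thesis using True f_pos[of "a^2"] assms aa \<open>0 \<le> w x\<close>
        by (simp add: ennreal_mult[symmetric] ennreal_leI)
    qed simp
  qed
  also have "\<dots> = ennreal (f (a^2)) * (\<integral>\<^sup>+x. ennreal (w x) * indicator {a..<a^2} x \<partial>lborel)"
    by (rule nn_integral_cmult) simp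
  also have "\<dots> = ennreal (f (a^2) / (2 * ln a))"
    unfolding Ico using f_pos[of "a^2"] assms aa la by (simp add: ennreal_mult[symmetric])
  finally show "(\<integral>\<^sup>+x. ennreal (h x) * indicator {a..<a^2} x \<partial>lborel) \<le> ennreal (f (a^2) / (2 * ln a))" .
qed


lemma tail_small:
  assumes fin: "(\<integral>\<^sup>+x. ennreal (h x) * indicator {K..} x \<partial>lborel) < \<infinity>" and e: "e > 0"
  shows "\<exists>N. (\<integral>\<^sup>+x. ennreal (h x) * indicator {max K N..} x \<partial>lborel) < ennreal e"
proof -
  define F where "F i x = ennreal (h x) * indicator {max K (real i)..} x" for i x
  have Fm: "F i \<in> borel_measurable lborel" for i
    unfolding F_def using meas[of "{max K (real i)..}"] by simp
  have dec: "AE x in lborel. F (Suc i) x \<le> F i x" for i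
    by (rule AE_I2) (auto simp: F_def split: split_indicator)
  have F0: "F 0 = (\<lambda>x. ennreal (h x) * indicator {K..} x)"
    using Kgt1 by (intro ext) (simp add: F_def max_def)
  have "(\<integral>\<^sup>+ x. (INF i. F i x) \<partial>lborel) = (INF i. integral\<^sup>N lborel (F i))"
    by (rule nn_integral_monotone_convergence_INF_AE') (use dec Fm fin F0 in auto)
  moreover have "(INF i. F i x) = 0" for x
  proof -
    have "F (nat \<lceil>x\<rceil> + 1) x = 0" unfolding F_def
      by (auto split: split_indicator) linarith
    then have "(INF i. F i x) \<le> 0" by (metis INF_lower2 UNIV_I order_refl)
    then show ?thesis by simp
  qed
  ultimately have "(INF i. integral\<^sup>N lborel (F i)) = 0" by simp
  then have "(INF i. integral\<^sup>N lborel (F i)) < ennreal e" using e by simp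
  then obtain i where "integral\<^sup>N lborel (F i) < ennreal e" by (auto simp: INF_less_iff)
  then show ?thesis unfolding F_def by blast
qed

context
  fixes r :: real
  assumes rK: "K \<le> r"
begin

definition A where "A k = r ^ (2 ^ Suc k)"

lemma r1: "r > 1" using rK Kgt1 by simp

lemma A_Suc: "A (Suc k) = (A k)^2"
  unfolding A_def by (simp add: power_mult[symmetric] mult.commute)

lemma A_mono: "k \<le> l \<Longrightarrow> A k \<le> A l"
  unfolding A_def using r1 by (intro power_increasing) auto

lemma A_ge: "r ^ Suc k \<le> A k"
proof -
  have "Suc k \<le> 2 ^ Suc k" using less_exp[of "Suc k"] by simp
  then show ?thesis unfolding A_def using r1 by (intro power_increasing) auto
qed

lemma A_K: "K \<le> A k"
proof -
  have "r ^ 1 \<le> r ^ Suc k" using r1 by (intro power_increasing) auto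
  then show ?thesis using A_ge[of k] rK by simp
qed

lemma ln_A: "ln (A k) = 2 ^ Suc k * ln r"
  unfolding A_def using r1 by (simp add: ln_realpow)

lemma disj: "disjoint_family (\<lambda>k. {A k..<A (Suc k)})"
  unfolding disjoint_family_on_def
proof (intro ballI impI)
  fix m n :: nat assume "m \<noteq> n"
  then have "Suc m \<le> n \<or> Suc n \<le> m" by auto
  then show "{A m..<A (Suc m)} \<inter> {A n..<A (Suc n)} = {}"
    using A_mono[of "Suc m" n] A_mono[of "Suc n" m] by auto
qed

lemma union: "(\<Union>k. {A k..<A (Suc k)}) = {A 0..}"
proof
  show "(\<Union>k. {A k..<A (Suc k)}) \<subseteq> {A 0..}"
  proof (rule UN_least)
    fix k show "{A k..<A (Suc k)} \<subseteq> {A 0..}" using A_mono[of 0 k] by auto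
  qed
  show "{A 0..} \<subseteq> (\<Union>k. {A k..<A (Suc k)})"
  proof
    fix x assume x: "x \<in> {A 0..}"
    obtain n where n: "x < r ^ n" using real_arch_pow[OF r1] by blast
    have "r ^ n \<le> r ^ Suc n" using r1 by (intro power_increasing) auto
    then have ex: "\<exists>n. x < A n" using A_ge[of n] n by (meson less_le_trans)
    define m where "m = (LEAST n. x < A n)"
    have m: "x < A m" unfolding m_def by (rule LeastI_ex[OF ex])
    have m0: "m \<noteq> 0"
    proof
      assume "m = 0" then show False using m x by simp
    qed
    then obtain k where k: "m = Suc k" by (cases m) auto
    have "\<not> x < A k" using not_less_Least[of k "\<lambda>n. x < A n"] k unfolding m_def by simp
    then have "x \<in> {A k..<A (Suc k)}" using m k by auto
    then show "x \<in> (\<Union>k. {A k..<A (Suc k)})" by blast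
  qed
qed

definition P where "P k = (\<integral>\<^sup>+x. ennreal (h x) * indicator {A k..<A (Suc k)} x \<partial>lborel)"

lemma decomp: "(\<integral>\<^sup>+x. ennreal (h x) * indicator {A 0..} x \<partial>lborel) = (\<Sum>k. P k)"
proof -
  have "(\<lambda>x. ennreal (h x) * indicator {A 0..} x) = (\<lambda>x. \<Sum>k. ennreal (h x) * indicator {A k..<A (Suc k)} x)"
  proof (intro ext)
    fix x
    show "ennreal (h x) * indicator {A 0..} x = (\<Sum>k. ennreal (h x) * indicator {A k..<A (Suc k)} x)"
      by (subst ennreal_suminf_cmult) (simp add: suminf_indicator[OF disj] union)
  qed
  moreover have "(\<lambda>x. ennreal (h x) * indicator {A k..<A (Suc k)} x) \<in> borel_measurable lborel" for k
  proof -
    have "{A k..<A (Suc k)} \<subseteq> {K..}" using A_K[of k] by auto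
    then show ?thesis using meas[of "{A k..<A (Suc k)}"] by simp
  qed
  ultimately show ?thesis unfolding P_def
    by (simp only:) (rule nn_integral_suminf)
qed

definition t where "t k = f (A k) / ln (A k)"

lemma t_nonneg: "0 \<le> t k"
  unfolding t_def using f_pos[OF A_K[of k]] ln_A[of k] r1 by simp

lemma P_lower: "ennreal (t k / 2) \<le> P k"
  using piece(1)[OF A_K[of k]] unfolding P_def A_Suc t_def by (simp add: mult.commute)

lemma P_upper: "P k \<le> ennreal (t (Suc k))"
  using piece(2)[OF A_K[of k]] unfolding P_def A_Suc t_def using A_K[of k] Kgt1
  by (simp add: ln_realpow)

lemma term_eq: "(\<lambda>k. ln (L (r ^ (2 ^ Suc k))) / (2 ^ Suc k * ln r)) = (\<lambda>k. - t k)"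
  apply (intro ext)
  apply (unfold A_def[symmetric])
  apply (simp add: t_def f_def ln_A)
  done

end


lemma fwd:
  assumes fin: "(\<integral>\<^sup>+x. ennreal (h x) * indicator {K..} x \<partial>lborel) < \<infinity>"
  shows "\<forall>\<delta>>0. \<exists>K\<^sub>1>K. \<forall>r>K\<^sub>1.
              summable (\<lambda>k. ln (L (r ^ (2 ^ Suc k))) / (2 ^ Suc k * ln r)) \<and>
              (\<Sum>k. ln (L (r ^ (2 ^ Suc k))) / (2 ^ Suc k * ln r)) > - \<delta>"
proof (intro allI impI)
  fix \<delta> :: real assume \<delta>: "\<delta> > 0"
  obtain N where N: "(\<integral>\<^sup>+x. ennreal (h x) * indicator {max K N..} x \<partial>lborel) < ennreal (\<delta>/2)"
    using tail_small[OF fin, of "\<delta>/2"] \<delta> by auto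
  show "\<exists>K\<^sub>1>K. \<forall>r>K\<^sub>1.
              summable (\<lambda>k. ln (L (r ^ (2 ^ Suc k))) / (2 ^ Suc k * ln r)) \<and>
              (\<Sum>k. ln (L (r ^ (2 ^ Suc k))) / (2 ^ Suc k * ln r)) > - \<delta>"
  proof (intro exI[of _ "max K N + 1"] conjI allI impI)
    show "max K N + 1 > K" by simp
    fix r assume r: "max K N + 1 < r"
    then have rK: "K \<le> r" by simp
    have "r \<le> A r 0" using A_ge[OF rK, of 0] by simp
    moreover have "max K N \<le> r" using r by (auto simp: max_def split: if_splits)
    ultimately have a0: "max K N \<le> A r 0" by (rule order_trans[rotated])
    have "(\<Sum>k. ennreal (t r k / 2)) \<le> (\<Sum>k. P r k)"
      by (rule suminf_le) (use P_lower[OF rK] in auto)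
    also have "\<dots> = (\<integral>\<^sup>+x. ennreal (h x) * indicator {A r 0..} x \<partial>lborel)"
      by (rule decomp[OF rK, symmetric])
    also have "\<dots> \<le> (\<integral>\<^sup>+x. ennreal (h x) * indicator {max K N..} x \<partial>lborel)"
      by (rule nn_integral_mono) (use a0 in \<open>auto split: split_indicator\<close>)
    also have "\<dots> < ennreal (\<delta>/2)" by (rule N)
    finally have S: "(\<Sum>k. ennreal (t r k / 2)) < ennreal (\<delta>/2)" .
    have tn: "0 \<le> t r k / 2" for k using t_nonneg[OF rK, of k] by simp
    have sum2: "summable (\<lambda>k. t r k / 2)"
      by (rule summable_suminf_not_top) (use tn S in auto)
    then have sumt: "summable (t r)" using summable_mult[OF sum2, of 2] by simp
    have "ennreal (\<Sum>k. t r k / 2) < ennreal (\<delta>/2)" using S suminf_ennreal2[OF tn sum2] by simp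
    moreover have "0 \<le> (\<Sum>k. t r k / 2)" using suminf_nonneg[OF sum2] tn by blast
    ultimately have "(\<Sum>k. t r k / 2) < \<delta>/2" by (simp add: ennreal_less_iff)
    then have "(\<Sum>k. t r k) < \<delta>" using suminf_divide[OF sumt, of 2] by simp
    then show "(\<Sum>k. ln (L (r ^ (2 ^ Suc k))) / (2 ^ Suc k * ln r)) > - \<delta>"
      unfolding term_eq[OF rK] using sumt by (simp add: suminf_minus)
    show "summable (\<lambda>k. ln (L (r ^ (2 ^ Suc k))) / (2 ^ Suc k * ln r))"
      unfolding term_eq[OF rK] using summable_minus[OF sumt] by simp
  qed
qed

lemma bwd:
  assumes H: "\<forall>\<delta>>0. \<exists>K\<^sub>1>K. \<forall>r>K\<^sub>1.
              summable (\<lambda>k. ln (L (r ^ (2 ^ Suc k))) / (2 ^ Suc k * ln r)) \<and>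
              (\<Sum>k. ln (L (r ^ (2 ^ Suc k))) / (2 ^ Suc k * ln r)) > - \<delta>"
  shows "(\<integral>\<^sup>+x. ennreal (h x) * indicator {K..} x \<partial>lborel) < \<infinity>"
proof -
  obtain K\<^sub>1 where K1': "K\<^sub>1 > K" and H1: "\<And>r. r > K\<^sub>1 \<Longrightarrow> summable (\<lambda>k. ln (L (r ^ (2 ^ Suc k))) / (2 ^ Suc k * ln r))"
    using H[rule_format, of 1] by auto
  define r where "r = K\<^sub>1 + 1"
  have rK: "K \<le> r" using K1' r_def by simp
  have "summable (\<lambda>k. - t r k)" using H1[of r] r_def unfolding term_eq[OF rK] by simp
  then have sumt: "summable (t r)" using summable_minus_iff by blast
  define a0 where "a0 = A r 0"
  have Ka0: "K \<le> a0" unfolding a0_def by (rule A_K[OF rK])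
  have lK: "ln K > 0" using Kgt1 by simp
  define C where "C = f a0 / (K * (ln K)^2)"
  have "(\<integral>\<^sup>+x. ennreal (h x) * indicator {K..} x \<partial>lborel) \<le>
        (\<integral>\<^sup>+x. ennreal (h x) * indicator {K..a0} x + ennreal (h x) * indicator {a0..} x \<partial>lborel)"
    by (rule nn_integral_mono) (auto split: split_indicator)
  also have "\<dots> = (\<integral>\<^sup>+x. ennreal (h x) * indicator {K..a0} x \<partial>lborel) + (\<integral>\<^sup>+x. ennreal (h x) * indicator {a0..} x \<partial>lborel)"
    by (rule nn_integral_add) (use meas[of "{K..a0}"] meas[of "{a0..}"] Ka0 in auto)
  also have "\<dots> < \<infinity>"
  proof -
    have "(\<integral>\<^sup>+x. ennreal (h x) * indicator {K..a0} x \<partial>lborel) \<le> (\<integral>\<^sup>+x. ennreal C * indicator {K..a0} x \<partial>lborel)"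
    proof (rule nn_integral_mono)
      fix x show "ennreal (h x) * indicator {K..a0} x \<le> ennreal C * indicator {K..a0} x"
      proof (cases "x \<in> {K..a0}")
        case True
        then have x: "K \<le> x" "x \<le> a0" by auto
        have lx: "ln K \<le> ln x" using x Kgt1 by simp
        have "(ln K)^2 \<le> (ln x)^2" using lx lK by (intro power_mono) auto
        then have "K * (ln K)^2 \<le> x * (ln x)^2" using x lK Kgt1 by (intro mult_mono) auto
        moreover have "f x \<le> f a0" using f_mono x by simp
        moreover have "0 < K * (ln K)^2" using lK Kgt1 by simp
        moreover have "0 \<le> f a0" using f_pos[OF Ka0] by simp
        ultimately have "h x \<le> C" unfolding h_def C_def by (intro frac_le) auto
        then show ?thesis using True by (simp add: ennreal_leI)
      qed simp
    qed
    also have "\<dots> = ennreal C * ennreal (a0 - K)"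
      using Ka0 by (simp add: nn_integral_cmult_indicator)
    also have "\<dots> < \<infinity>" by (simp add: ennreal_mult_less_top)
    finally have 1: "(\<integral>\<^sup>+x. ennreal (h x) * indicator {K..a0} x \<partial>lborel) < \<infinity>" .
    have sumS: "summable (\<lambda>k. t r (Suc k))" using sumt summable_Suc_iff by blast
    have "(\<integral>\<^sup>+x. ennreal (h x) * indicator {a0..} x \<partial>lborel) = (\<Sum>k. P r k)"
      unfolding a0_def by (rule decomp[OF rK])
    also have "\<dots> \<le> (\<Sum>k. ennreal (t r (Suc k)))"
      by (rule suminf_le) (use P_upper[OF rK] in auto)
    also have "\<dots> = ennreal (\<Sum>k. t r (Suc k))"
      by (rule suminf_ennreal2) (use t_nonneg[OF rK] sumS in auto)
    also have "\<dots> < \<infinity>" by simp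
    finally have 2: "(\<integral>\<^sup>+x. ennreal (h x) * indicator {a0..} x \<partial>lborel) < \<infinity>" .
    show ?thesis using 1 2 by (simp add: ennreal_add_less_top)
  qed
  finally show ?thesis .
qed

lemma prod:
  assumes H: "\<forall>\<delta>>0. \<exists>K\<^sub>1>K. \<forall>r>K\<^sub>1.
              summable (\<lambda>k. ln (L (r ^ (2 ^ Suc k))) / (2 ^ Suc k * ln r)) \<and>
              (\<Sum>k. ln (L (r ^ (2 ^ Suc k))) / (2 ^ Suc k * ln r)) > - \<delta>"
  shows "\<forall>\<delta>>0. \<exists>K\<^sub>1>K. \<forall>r>K\<^sub>1.
              convergent_prod (\<lambda>k. L (r ^ (2 ^ Suc k)) powr (1 / 2 ^ Suc k)) \<and>
              (\<Prod>k. L (r ^ (2 ^ Suc k)) powr (1 / 2 ^ Suc k)) > r powr (- \<delta>)"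
proof (intro allI impI)
  fix \<delta> :: real assume \<delta>: "\<delta> > 0"
  obtain K\<^sub>1 where K1': "K\<^sub>1 > K" and H1: "\<And>r. r > K\<^sub>1 \<Longrightarrow> summable (\<lambda>k. ln (L (r ^ (2 ^ Suc k))) / (2 ^ Suc k * ln r)) \<and>
              (\<Sum>k. ln (L (r ^ (2 ^ Suc k))) / (2 ^ Suc k * ln r)) > - \<delta>"
    using H[rule_format, OF \<delta>] by auto
  show "\<exists>K\<^sub>1>K. \<forall>r>K\<^sub>1.
              convergent_prod (\<lambda>k. L (r ^ (2 ^ Suc k)) powr (1 / 2 ^ Suc k)) \<and>
              (\<Prod>k. L (r ^ (2 ^ Suc k)) powr (1 / 2 ^ Suc k)) > r powr (- \<delta>)"
  proof (intro exI[of _ K\<^sub>1] conjI allI impI)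
    show "K\<^sub>1 > K" by (rule K1')
    fix r assume r: "r > K\<^sub>1"
    define s where "s k = ln (L (r ^ (2 ^ Suc k))) / (2 ^ Suc k * ln r)" for k
    have ss: "summable s" and sg: "suminf s > - \<delta>" using H1[OF r] unfolding s_def by auto
    have r1: "r > 1" using r K1' Kgt1 by simp
    then have lr: "ln r > 0" by simp
    have eq: "(\<lambda>k. L (r ^ (2 ^ Suc k)) powr (1 / 2 ^ Suc k)) = (\<lambda>k. exp (ln r * s k))"
    proof (intro ext)
      fix k
      have "L (r ^ (2 ^ Suc k)) > 0" using pos r1 by simp
      then show "L (r ^ (2 ^ Suc k)) powr (1 / 2 ^ Suc k) = exp (ln r * s k)"
        unfolding s_def powr_def using lr by simp
    qed
    have sa: "summable (\<lambda>k. ln r * s k)" using summable_mult[OF ss] by simp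
    show "convergent_prod (\<lambda>k. L (r ^ (2 ^ Suc k)) powr (1 / 2 ^ Suc k))"
      unfolding eq by (rule convergent_prod_exp[OF sa])
    have "(\<Prod>k. L (r ^ (2 ^ Suc k)) powr (1 / 2 ^ Suc k)) = exp (ln r * suminf s)"
      unfolding eq prodinf_exp[OF sa] suminf_mult[OF ss] ..
    moreover have "ln r * suminf s > ln r * (- \<delta>)" using mult_strict_left_mono[OF sg lr] by simp
    ultimately show "(\<Prod>k. L (r ^ (2 ^ Suc k)) powr (1 / 2 ^ Suc k)) > r powr (- \<delta>)"
      using r1 by (simp add: powr_def mult.commute)
  qed
qed

end

theorem lemma3p4:
  fixes L :: "real \<Rightarrow> real" and K :: real
  assumes pos: "\<And>r. r > 0 \<Longrightarrow> L r > 0"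
    and sv: "slowly_varying L"
    and K1: "K > 1"
    and noninc: "\<And>x y. K \<le> x \<Longrightarrow> x \<le> y \<Longrightarrow> L y \<le> L x"
    and lt1: "\<And>r. K \<le> r \<Longrightarrow> L r < 1"
  shows "((\<integral>\<^sup>+ r \<in> {K..}. ennreal (- ln (L r) / (r * (ln r)\<^sup>2)) \<partial>lborel) < \<infinity>
          \<longleftrightarrow>
          (\<forall>\<delta>>0. \<exists>K\<^sub>1>K. \<forall>r>K\<^sub>1.
              summable (\<lambda>k. ln (L (r ^ (2 ^ Suc k))) / (2 ^ Suc k * ln r)) \<and>
              (\<Sum>k. ln (L (r ^ (2 ^ Suc k))) / (2 ^ Suc k * ln r)) > - \<delta>))
     \<and> ((\<forall>\<delta>>0. \<exists>K\<^sub>1>K. \<forall>r>K\<^sub>1.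
              summable (\<lambda>k. ln (L (r ^ (2 ^ Suc k))) / (2 ^ Suc k * ln r)) \<and>
              (\<Sum>k. ln (L (r ^ (2 ^ Suc k))) / (2 ^ Suc k * ln r)) > - \<delta>)
        \<longrightarrow> (\<forall>\<delta>>0. \<exists>K\<^sub>1>K. \<forall>r>K\<^sub>1.
              convergent_prod (\<lambda>k. L (r ^ (2 ^ Suc k)) powr (1 / 2 ^ Suc k)) \<and>
              (\<Prod>k. L (r ^ (2 ^ Suc k)) powr (1 / 2 ^ Suc k)) > r powr (- \<delta>)))"
proof -
  have lp: "lp L K" unfolding lp_def using pos K1 noninc lt1 by blast
  have Ieq: "(\<integral>\<^sup>+ r \<in> {K..}. ennreal (- ln (L r) / (r * (ln r)\<^sup>2)) \<partial>lborel)
     = (\<integral>\<^sup>+x. ennreal (lp.h L x) * indicator {K..} x \<partial>lborel)"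
    by (simp add: lp.h_def[OF lp] lp.f_def[OF lp])
  show ?thesis
    unfolding Ieq using lp.fwd[OF lp] lp.bwd[OF lp] lp.prod[OF lp] by blast
qed

end
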